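(* Let $f:\mathbb{R}\to\mathbb{R}$ be twice continuously differentiable, and let $u_L<u_U$ with $f''>0$ on $(u_L,u_U)$ or $f''<0$ on $(u_L,u_U)$. Let $x_1<x_2=x_3<x_4$, set $x_{23}=x_2$, and let $u_1,u_2,u_3,u_4\in[u_L,u_U]$. Then there exists $u_{23}$ in the closed interval with endpoints $u_2$ and $u_3$ such that $$(x_{23}-x_1)\,a(u_1,u_{23})+(x_4-x_{23})\,a(u_{23},u_4)=(x_2-x_1)\,a(u_1,u_2)+(x_3-x_2)\,a(u_2,u_3)+(x_4-x_3)\,a(u_3,u_4),$$ where $a$ is the nonlinear average defined below (note the middle term on the right vanishes since $x_2=x_3$).
   Context: For $g:\mathbb{R}\to\mathbb{R}$ write $[g(u)]_{a}^{b}=g(b)-g(a)$. For $u_1\neq u_2$ the nonlinear average is $a(u_1,u_2)=\frac{[f'(u)u-f(u)]_{u_1}^{u_2}}{[f'(u)]_{u_1}^{u_2}}=\frac{\int_{u_1}^{u_2}f''(u)u\,\mathrm{d}u}{\int_{u_1}^{u_2}f''(u)\,\mathrm{d}u}$, and $a(u,u)=u$. *)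

theory Defs
  imports "HOL-Analysis.Analysis"
begin

definition nl_avg :: "(real \<Rightarrow> real) \<Rightarrow> (real \<Rightarrow> real) \<Rightarrow> real \<Rightarrow> real \<Rightarrow> real" where
  "nl_avg f f' u1 u2 =
     (if u1 = u2 then u1
      else ((f' u2 * u2 - f u2) - (f' u1 * u1 - f u1)) / (f' u2 - f' u1))"

end

theory Submission
  imports Defs
begin

lemma nl_avg_sym: "nl_avg f f' p q = nl_avg f f' q p"
proof -
  have e: "\<And>A B C D::real. (A - B)/(C - D) = (B - A)/(D - C)"
    by (metis minus_diff_eq minus_divide_divide)
  show ?thesis unfolding nl_avg_def
    using e[of "f' q * q - f q" "f' p * p - f p" "f' q" "f' p"] by auto
qed

lemma nl_avg_neg: "nl_avg (\<lambda>u. - f u) (\<lambda>u. - f' u) p q = nl_avg f f' p q"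
proof (cases "f' q = f' p")
  case True then show ?thesis unfolding nl_avg_def by simp
next
  case False
  then have "f' q - f' p \<noteq> 0" by simp
  then show ?thesis unfolding nl_avg_def by (simp add: field_simps)
qed

context
  fixes f f' f'' :: "real \<Rightarrow> real" and uL uU :: real
  assumes f': "\<And>u. (f has_real_derivative f' u) (at u)"
    and f'': "\<And>u. (f' has_real_derivative f'' u) (at u)"
    and pos: "\<forall>u\<in>{uL<..<uU}. f'' u > 0"
begin

lemma Gmono: "p \<in> {uL..uU} \<Longrightarrow> q \<in> {uL..uU} \<Longrightarrow> p < q \<Longrightarrow> f' p < f' q"
proof -
  assume p: "p \<in> {uL..uU}" and q: "q \<in> {uL..uU}" and pq: "p < q"
  obtain z where z: "p < z" "z < q" "f' q - f' p = (q - p) * f'' z"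
    using MVT2[OF pq, of f' f''] f'' by blast
  have "f'' z > 0" using pos z p q by auto
  then have "(q - p) * f'' z > 0" using pq by simp
  then show ?thesis using z by linarith
qed

lemma PQ:
  assumes p: "p \<in> {uL..uU}" and q: "q \<in> {uL..uU}" and pq: "p \<le> q"
  shows "p * (f' q - f' p) \<le> (f' q * q - f q) - (f' p * p - f p)
       \<and> (f' q * q - f q) - (f' p * p - f p) \<le> q * (f' q - f' p)"
proof (cases "p = q")
  case True then show ?thesis by simp
next
  case False
  with pq have lt: "p < q" by simp
  have d1: "((\<lambda>t. f' t * t - f t - p * f' t) has_real_derivative f'' t * (t - p)) (at t)" for t
    using f' f'' by (auto intro!: derivative_eq_intros simp: algebra_simps)
  have d2: "((\<lambda>t. q * f' t - (f' t * t - f t)) has_real_derivative f'' t * (q - t)) (at t)" for t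
    using f' f'' by (auto intro!: derivative_eq_intros simp: algebra_simps)
  obtain z where z: "p < z" "z < q"
     "(f' q * q - f q - p * f' q) - (f' p * p - f p - p * f' p) = (q - p) * (f'' z * (z - p))"
    using MVT2[OF lt, of "\<lambda>t. f' t * t - f t - p * f' t" "\<lambda>t. f'' t * (t - p)"] d1 by blast
  obtain w where w: "p < w" "w < q"
     "(q * f' q - (f' q * q - f q)) - (q * f' p - (f' p * p - f p)) = (q - p) * (f'' w * (q - w))"
    using MVT2[OF lt, of "\<lambda>t. q * f' t - (f' t * t - f t)" "\<lambda>t. f'' t * (q - t)"] d2 by blast
  have "f'' z > 0" "f'' w > 0" using pos z w p q by auto
  then have "(q - p) * (f'' z * (z - p)) \<ge> 0" "(q - p) * (f'' w * (q - w)) \<ge> 0"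
    using z w lt by auto
  moreover have "(f' q * q - f q) - (f' p * p - f p) - p * (f' q - f' p) = (q - p) * (f'' z * (z - p))"
    using z(3) by (simp add: algebra_simps)
  moreover have "q * (f' q - f' p) - ((f' q * q - f q) - (f' p * p - f p)) = (q - p) * (f'' w * (q - w))"
    using w(3) by (simp add: algebra_simps)
  ultimately show ?thesis by linarith
qed

lemma bound:
  assumes p: "p \<in> {uL..uU}" and q: "q \<in> {uL..uU}" and pq: "p \<le> q"
  shows "p \<le> nl_avg f f' p q \<and> nl_avg f f' p q \<le> q"
proof (cases "p = q")
  case True then show ?thesis unfolding nl_avg_def by simp
next
  case False
  with pq have lt: "p < q" by simp
  have D: "f' q - f' p > 0" using Gmono[OF p q lt] by simp
  from PQ[OF p q pq] D show ?thesis using False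
    unfolding nl_avg_def by (simp add: pos_le_divide_eq pos_divide_le_eq mult.commute)
qed

lemma mediant:
  assumes p: "p \<in> {uL..uU}" and r: "r \<in> {uL..uU}" and pq: "p < q" and qr: "q < r"
  shows "nl_avg f f' p q \<le> nl_avg f f' p r \<and> nl_avg f f' p r \<le> nl_avg f f' q r"
proof -
  have q: "q \<in> {uL..uU}" using p r pq qr by auto
  define N1 where "N1 = (f' q * q - f q) - (f' p * p - f p)"
  define N2 where "N2 = (f' r * r - f r) - (f' q * q - f q)"
  define D1 where "D1 = f' q - f' p"
  define D2 where "D2 = f' r - f' q"
  have D1: "D1 > 0" using Gmono[OF p q pq] D1_def by simp
  have D2: "D2 > 0" using Gmono[OF q r qr] D2_def by simp
  have h1: "N1 \<le> q * D1" using PQ[OF p q] pq N1_def D1_def by simp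
  have h2: "q * D2 \<le> N2" using PQ[OF q r] qr N2_def D2_def by simp
  have a1: "nl_avg f f' p q = N1 / D1" unfolding nl_avg_def N1_def D1_def using pq by simp
  have a2: "nl_avg f f' q r = N2 / D2" unfolding nl_avg_def N2_def D2_def using qr by simp
  have a3: "nl_avg f f' p r = (N1 + N2) / (D1 + D2)" unfolding nl_avg_def N1_def D1_def N2_def D2_def
    using pq qr by simp
  have k: "N1 * D2 \<le> N2 * D1"
  proof -
    have "N1 * D2 \<le> q * D1 * D2" using h1 D2 by (simp add: mult_right_mono)
    also have "\<dots> = (q * D2) * D1" by simp
    also have "\<dots> \<le> N2 * D1" using h2 D1 by (simp add: mult_right_mono)
    finally show ?thesis .
  qed
  have "N1 / D1 \<le> (N1 + N2) / (D1 + D2)"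
    using D1 D2 k by (simp add: divide_simps algebra_simps)
  moreover have "(N1 + N2) / (D1 + D2) \<le> N2 / D2"
    using D1 D2 k by (simp add: divide_simps algebra_simps)
  ultimately show ?thesis using a1 a2 a3 by simp
qed

lemma mono:
  assumes w: "w \<in> {uL..uU}" and v2: "v2 \<in> {uL..uU}" and v3: "v3 \<in> {uL..uU}" and le: "v2 \<le> v3"
  shows "nl_avg f f' w v2 \<le> nl_avg f f' w v3"
proof -
  consider "w < v2 \<and> v2 < v3" | "v2 < v3 \<and> v3 < w" | "v2 \<le> w \<and> w \<le> v3" | "v2 = v3"
    using le by linarith
  then show ?thesis
  proof cases
    case 1 then show ?thesis using mediant[OF w v3] by auto
  next
    case 2
    then have "nl_avg f f' v2 w \<le> nl_avg f f' v3 w" using mediant[OF v2 w, of v3] by simp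
    then show ?thesis using nl_avg_sym[of f f' w v2] nl_avg_sym[of f f' w v3] by linarith
  next
    case 3
    then have "nl_avg f f' v2 w \<le> w" "w \<le> nl_avg f f' w v3"
      using bound[OF v2 w] bound[OF w v3] by auto
    then show ?thesis using nl_avg_sym[of f f' v2 w] by linarith
  next
    case 4 then show ?thesis by simp
  qed
qed

lemma contf: "continuous_on {uL..uU} (\<lambda>v. nl_avg f f' w v)" if w: "w \<in> {uL..uU}"
proof -
  have "continuous (at v0 within {uL..uU}) (\<lambda>v. nl_avg f f' w v)" if v0: "v0 \<in> {uL..uU}" for v0
  proof (cases "v0 = w")
    case True
    have bd: "dist (nl_avg f f' w v) (nl_avg f f' w w) \<le> dist v w" if v: "v \<in> {uL..uU}" for v
    proof (cases "w \<le> v")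
      case True then show ?thesis using bound[OF w v] by (simp add: dist_real_def nl_avg_def[of f f' w w])
    next
      case False then show ?thesis using bound[OF v w] nl_avg_sym[of f f' w v]
        by (simp add: dist_real_def nl_avg_def[of f f' w w])
    qed
    show ?thesis unfolding continuous_within_eps_delta True
    proof (intro allI impI)
      fix e :: real assume e: "e > 0"
      show "\<exists>d>0. \<forall>x'\<in>{uL..uU}. dist x' w < d \<longrightarrow> dist (nl_avg f f' w x') (nl_avg f f' w w) < e"
      proof (intro exI[of _ e] conjI ballI impI)
        fix x' assume "x' \<in> {uL..uU}" "dist x' w < e"
        then show "dist (nl_avg f f' w x') (nl_avg f f' w w) < e"
          using bd[of x'] by linarith
      qed (rule e)
    qed
  next
    case False
    have ne: "f' v0 - f' w \<noteq> 0"
      using Gmono[OF v0 w] Gmono[OF w v0] False by (cases "v0 < w") auto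
    have cf: "isCont f x" "isCont f' x" for x
      using f' f'' DERIV_isCont by blast+
    have "isCont (\<lambda>v. ((f' v * v - f v) - (f' w * w - f w)) / (f' v - f' w)) v0"
      using ne cf by (intro continuous_intros) auto
    moreover have ev: "eventually (\<lambda>v. nl_avg f f' w v = ((f' v * v - f v) - (f' w * w - f w)) / (f' v - f' w)) (nhds v0)"
    proof -
      have "eventually (\<lambda>v. v \<noteq> w) (nhds v0)" using False t1_space_nhds by blast
      then show ?thesis by eventually_elim (simp add: nl_avg_def)
    qed
    ultimately have "isCont (\<lambda>v. nl_avg f f' w v) v0" using isCont_cong[OF ev] by simp
    then show ?thesis using continuous_at_imp_continuous_at_within by blast
  qed
  then show ?thesis using continuous_on_eq_continuous_within by blast
qed

lemma convex_case:
  fixes x1 x2 x3 x4 x23 u1 u2 u3 u4 :: real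
  assumes x: "x1 < x2" "x2 = x3" "x3 < x4"
    and x23: "x23 = x2"
    and u: "u1 \<in> {uL..uU}" "u2 \<in> {uL..uU}" "u3 \<in> {uL..uU}" "u4 \<in> {uL..uU}"
  shows "\<exists>u23 \<in> {min u2 u3..max u2 u3}.
           (x23 - x1) * nl_avg f f' u1 u23 + (x4 - x23) * nl_avg f f' u23 u4
         = (x2 - x1) * nl_avg f f' u1 u2 + (x3 - x2) * nl_avg f f' u2 u3
           + (x4 - x3) * nl_avg f f' u3 u4"
proof -
  define c1 where "c1 = x2 - x1"
  define c2 where "c2 = x4 - x2"
  have c: "c1 > 0" "c2 > 0" using x c1_def c2_def by auto
  define g where "g v = c1 * nl_avg f f' u1 v + c2 * nl_avg f f' u4 v" for v
  define T where "T = c1 * nl_avg f f' u1 u2 + c2 * nl_avg f f' u3 u4"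
  define lo where "lo = min u2 u3"
  define hi where "hi = max u2 u3"
  have sub: "{lo..hi} \<subseteq> {uL..uU}" using u lo_def hi_def by auto
  have cg: "continuous_on {lo..hi} g" unfolding g_def
    by (intro continuous_intros continuous_on_subset[OF contf sub] u)
  have glo: "g lo \<le> T" and ghi: "T \<le> g hi"
  proof -
    show "g lo \<le> T"
    proof (cases "u2 \<le> u3")
      case True
      have "nl_avg f f' u4 u2 \<le> nl_avg f f' u4 u3" using mono[OF u(4) u(2) u(3) True] .
      then show ?thesis using c nl_avg_sym[of f f' u4] unfolding g_def T_def lo_def using True
        by (simp add: min_def mult_left_mono)
    next
      case False
      have "nl_avg f f' u1 u3 \<le> nl_avg f f' u1 u2" using mono[OF u(1) u(3) u(2)] False by simp
      then show ?thesis using c nl_avg_sym[of f f' u4] unfolding g_def T_def lo_def using False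
        by (simp add: min_def mult_left_mono)
    qed
    show "T \<le> g hi"
    proof (cases "u2 \<le> u3")
      case True
      have "nl_avg f f' u1 u2 \<le> nl_avg f f' u1 u3" using mono[OF u(1) u(2) u(3) True] .
      then show ?thesis using c nl_avg_sym[of f f' u4] unfolding g_def T_def hi_def using True
        by (simp add: max_def mult_left_mono)
    next
      case False
      have "nl_avg f f' u4 u3 \<le> nl_avg f f' u4 u2" using mono[OF u(4) u(3) u(2)] False by simp
      then show ?thesis using c nl_avg_sym[of f f' u4] unfolding g_def T_def hi_def using False
        by (simp add: max_def mult_left_mono)
    qed
  qed
  have lh: "lo \<le> hi" by (simp add: lo_def hi_def)
  obtain v where v: "lo \<le> v" "v \<le> hi" "g v = T"
    using IVT'[OF glo ghi lh cg] by auto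
  have vin: "v \<in> {min u2 u3..max u2 u3}" using v lo_def hi_def by simp
  have "(x23 - x1) * nl_avg f f' u1 v + (x4 - x23) * nl_avg f f' v u4
         = (x2 - x1) * nl_avg f f' u1 u2 + (x3 - x2) * nl_avg f f' u2 u3
           + (x4 - x3) * nl_avg f f' u3 u4"
    using v(3) nl_avg_sym[of f f' v u4] x(2) x23 by (simp add: g_def T_def c1_def c2_def)
  then show ?thesis using vin by blast
qed

end

theorem lemma3:
  fixes f f' f'' :: "real \<Rightarrow> real"
    and uL uU x1 x2 x3 x4 x23 u1 u2 u3 u4 :: real
  assumes f': "\<And>u. (f has_real_derivative f' u) (at u)"
    and f'': "\<And>u. (f' has_real_derivative f'' u) (at u)"
    and cont: "continuous_on UNIV f''"
    and uLU: "uL < uU"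
    and sign: "(\<forall>u\<in>{uL<..<uU}. f'' u > 0) \<or> (\<forall>u\<in>{uL<..<uU}. f'' u < 0)"
    and x: "x1 < x2" "x2 = x3" "x3 < x4"
    and x23: "x23 = x2"
    and u: "u1 \<in> {uL..uU}" "u2 \<in> {uL..uU}" "u3 \<in> {uL..uU}" "u4 \<in> {uL..uU}"
  shows "\<exists>u23 \<in> {min u2 u3..max u2 u3}.
           (x23 - x1) * nl_avg f f' u1 u23 + (x4 - x23) * nl_avg f f' u23 u4
         = (x2 - x1) * nl_avg f f' u1 u2 + (x3 - x2) * nl_avg f f' u2 u3
           + (x4 - x3) * nl_avg f f' u3 u4"
  using sign
proof
  assume "\<forall>u\<in>{uL<..<uU}. f'' u > 0"
  then show ?thesis using convex_case[OF f' f''] x x23 u by blast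
next
  assume n: "\<forall>u\<in>{uL<..<uU}. f'' u < 0"
  have d1: "((\<lambda>u. - f u) has_real_derivative - f' u) (at u)" for u
    using f' by (intro derivative_intros)
  have d2: "((\<lambda>u. - f' u) has_real_derivative - f'' u) (at u)" for u
    using f'' by (intro derivative_intros)
  have p: "\<forall>u\<in>{uL<..<uU}. - f'' u > 0" using n by auto
  show ?thesis using convex_case[OF d1 d2 p x x23 u] unfolding nl_avg_neg .
qed

end
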